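(* Let $n\ge3$ and suppose $T=T_\lambda(r,m)$ acts linearly and inner faithfully on $\Bbbk\overline{Q}$ so that $g$ acts by a rotation: $g\cdot e_i=e_{i+d}$, $g\cdot a_i=\mu_ia_{i+d}$, $g\cdot a_i^*=\mu_i^*a^*_{i+d}$ for some integer $0<d\le n-1$ and $\mu_i,\mu_i^*\in\Bbbk^\times$. Let $\sigma$ be the quiver-Taft map of the action. If $n\ne4$ or $d\ne2$, then $\sigma^r(a)=0$ for every arrow $a$ of $\overline{Q}$.
   Context: Let $\Bbbk$ be a field, $r>1$ and $m$ positive integers with $r\mid m$, and $\lambda\in\Bbbk$ a primitive $r$-th root of unity, with $r$ coprime to the characteristic of $\Bbbk$. The generalized Taft algebra $T=T_\lambda(r,m)$ is the Hopf algebra generated by $g,x$ with relations $gx=\lambda xg$, $g^m=1$, $x^r=0$, $\Delta(g)=g\otimes g$, $\Delta(x)=1\otimes x+x\otimes g$, $\varepsilon(g)=1,\varepsilon(x)=0$, $S(g)=g^{-1}$, $S(x)=-xg^{-1}$. An action of $T$ on an algebra $A$ is a $T$-module algebra structure; so $g$ acts by an algebra automorphism and $x\cdot(ab)=a(x\cdot b)+(x\cdot a)(g\cdot b)$. It is inner faithful if no nonzero Hopf ideal $I$ of $T$ satisfies $I\cdot A=0$. Vertex indices are taken modulo $n$. $\overline{Q}$ has vertices $0,\dots,n-1$ and arrows $a_i:i\to i+1$, $a_i^*:i+1\to i$; in $\Bbbk\overline{Q}$, $e_i$ is the trivial path at $i$, $s(a),t(a)$ source and target, and $pq$ is concatenation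 ($p$ then $q$) if $t(p)=s(q)$, else $0$. A linear action: $g$ acts by a path-length-preserving automorphism ($g\cdot e_i=e_{g\cdot i}$) and $x$ maps vertices into the span of vertices and arrows into the span of vertices and arrows. Then there are scalars $\gamma_i$ with $x\cdot e_i=\gamma_ie_i-\gamma_i\lambda^{-1}e_{g\cdot i}$; the quiver-Taft map $\sigma$ is the linear map on the span of vertices and arrows with $\sigma(e_i)=0$ and $\sigma(a)=x\cdot a-\gamma_{t(a)}a+\gamma_{s(a)}\lambda^{-1}(g\cdot a)$ for arrows $a$; $\sigma^r$ is its $r$-fold iterate. *)

theory Defs
  imports Main "HOL-Library.Function_Algebras"
begin

text \<open>Vertices 0..n-1 (indices mod n). Arrow Ar i is a_i : i -> i+1,
  arrow As i is a_i^* : i+1 -> i (valid when i < n).\<close>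

datatype arr = Ar nat | As nat

fun aidx :: "arr \<Rightarrow> nat" where
  "aidx (Ar i) = i" | "aidx (As i) = i"

fun asrc :: "nat \<Rightarrow> arr \<Rightarrow> nat" where
  "asrc n (Ar i) = i" | "asrc n (As i) = Suc i mod n"

fun atgt :: "nat \<Rightarrow> arr \<Rightarrow> nat" where
  "atgt n (Ar i) = Suc i mod n" | "atgt n (As i) = i"

datatype path = Triv nat | Arrs "arr list"

fun valid_path :: "nat \<Rightarrow> path \<Rightarrow> bool" where
  "valid_path n (Triv i) = (i < n)"
| "valid_path n (Arrs l) = (l \<noteq> [] \<and> (\<forall>a\<in>set l. aidx a < n) \<and>
      (\<forall>k. Suc k < length l \<longrightarrow> atgt n (l ! k) = asrc n (l ! Suc k)))"

fun psrc :: "nat \<Rightarrow> path \<Rightarrow> nat" where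
  "psrc n (Triv i) = i" | "psrc n (Arrs l) = asrc n (hd l)"

fun ptgt :: "nat \<Rightarrow> path \<Rightarrow> nat" where
  "ptgt n (Triv i) = i" | "ptgt n (Arrs l) = atgt n (last l)"

fun plen :: "path \<Rightarrow> nat" where
  "plen (Triv i) = 0" | "plen (Arrs l) = length l"

definition pcat :: "nat \<Rightarrow> path \<Rightarrow> path \<Rightarrow> path option" where
  "pcat n p q = (if ptgt n p = psrc n q then
      Some (case p of Triv _ \<Rightarrow> q
                    | Arrs l \<Rightarrow> (case q of Triv _ \<Rightarrow> p | Arrs l' \<Rightarrow> Arrs (l @ l')))
    else None)"

definition Aset :: "nat \<Rightarrow> (path \<Rightarrow> 'k::field) set" where
  "Aset n = {f. finite {p. f p \<noteq> 0} \<and> (\<forall>p. f p \<noteq> 0 \<longrightarrow> valid_path n p)}"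

definition amul :: "nat \<Rightarrow> (path \<Rightarrow> 'k::field) \<Rightarrow> (path \<Rightarrow> 'k) \<Rightarrow> path \<Rightarrow> 'k" where
  "amul n f h = (\<lambda>p. \<Sum>p1\<in>{q. f q \<noteq> 0}. \<Sum>p2\<in>{q. h q \<noteq> 0}.
       if pcat n p1 p2 = Some p then f p1 * h p2 else 0)"

definition aone :: "nat \<Rightarrow> path \<Rightarrow> 'k::field" where
  "aone n = (\<lambda>p. case p of Triv i \<Rightarrow> (if i < n then 1 else 0) | Arrs _ \<Rightarrow> 0)"

definition sing :: "path \<Rightarrow> path \<Rightarrow> 'k::field" where
  "sing p = (\<lambda>q. if q = p then 1 else 0)"

definition vtx :: "nat \<Rightarrow> path \<Rightarrow> 'k::field" where
  "vtx i = sing (Triv i)"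

definition arrow :: "arr \<Rightarrow> path \<Rightarrow> 'k::field" where
  "arrow a = sing (Arrs [a])"

text \<open>Elements are coefficient functions on the basis g^i x^j (i < m, j < r).\<close>
definition TB :: "nat \<Rightarrow> nat \<Rightarrow> (nat \<times> nat) set" where
  "TB m r = {..<m} \<times> {..<r}"

definition Tset :: "nat \<Rightarrow> nat \<Rightarrow> (nat \<times> nat \<Rightarrow> 'k::field) set" where
  "Tset m r = {t. \<forall>u. u \<notin> TB m r \<longrightarrow> t u = 0}"

text \<open>Structure constants: (g^i x^j)(g^k x^l) = lam^(-jk) g^(i+k) x^(j+l), using x g = lam^-1 g x.\<close>
definition scoef :: "nat \<Rightarrow> nat \<Rightarrow> 'k::field \<Rightarrow> nat \<times> nat \<Rightarrow> nat \<times> nat \<Rightarrow> nat \<times> nat \<Rightarrow> 'k" where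
  "scoef m r lam u v w =
     (if (fst u + fst v) mod m = fst w \<and> snd u + snd v = snd w \<and> snd w < r
      then (inverse lam) ^ (snd u * fst v) else 0)"

definition tmul :: "nat \<Rightarrow> nat \<Rightarrow> 'k::field \<Rightarrow> (nat \<times> nat \<Rightarrow> 'k) \<Rightarrow> (nat \<times> nat \<Rightarrow> 'k) \<Rightarrow> nat \<times> nat \<Rightarrow> 'k" where
  "tmul m r lam a b = (\<lambda>w. \<Sum>u\<in>TB m r. \<Sum>v\<in>TB m r. a u * b v * scoef m r lam u v w)"

definition tbasis :: "nat \<times> nat \<Rightarrow> nat \<times> nat \<Rightarrow> 'k::field" where
  "tbasis u = (\<lambda>w. if w = u then 1 else 0)"

definition tpow :: "nat \<Rightarrow> nat \<Rightarrow> 'k::field \<Rightarrow> (nat \<times> nat \<Rightarrow> 'k) \<Rightarrow> nat \<Rightarrow> nat \<times> nat \<Rightarrow> 'k" where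
  "tpow m r lam a k = (tmul m r lam a ^^ k) (tbasis (0,0))"

text \<open>T (x) T: coefficient functions on pairs of basis elements.\<close>
definition tens :: "(nat \<times> nat \<Rightarrow> 'k::field) \<Rightarrow> (nat \<times> nat \<Rightarrow> 'k) \<Rightarrow> (nat \<times> nat) \<times> (nat \<times> nat) \<Rightarrow> 'k" where
  "tens a b = (\<lambda>w. a (fst w) * b (snd w))"

definition ttmul :: "nat \<Rightarrow> nat \<Rightarrow> 'k::field \<Rightarrow> ((nat \<times> nat) \<times> (nat \<times> nat) \<Rightarrow> 'k)
     \<Rightarrow> ((nat \<times> nat) \<times> (nat \<times> nat) \<Rightarrow> 'k) \<Rightarrow> (nat \<times> nat) \<times> (nat \<times> nat) \<Rightarrow> 'k" where
  "ttmul m r lam a b = (\<lambda>w. \<Sum>u\<in>TB m r \<times> TB m r. \<Sum>v\<in>TB m r \<times> TB m r.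
      a u * b v * scoef m r lam (fst u) (fst v) (fst w) * scoef m r lam (snd u) (snd v) (snd w))"

definition ttpow :: "nat \<Rightarrow> nat \<Rightarrow> 'k::field \<Rightarrow> ((nat \<times> nat) \<times> (nat \<times> nat) \<Rightarrow> 'k) \<Rightarrow> nat
     \<Rightarrow> (nat \<times> nat) \<times> (nat \<times> nat) \<Rightarrow> 'k" where
  "ttpow m r lam a k = (ttmul m r lam a ^^ k) (tens (tbasis (0,0)) (tbasis (0,0)))"

text \<open>Delta(g) = g (x) g, Delta(x) = 1 (x) x + x (x) g, extended multiplicatively.\<close>
definition tdelta :: "nat \<Rightarrow> nat \<Rightarrow> 'k::field \<Rightarrow> (nat \<times> nat \<Rightarrow> 'k) \<Rightarrow> (nat \<times> nat) \<times> (nat \<times> nat) \<Rightarrow> 'k" where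
  "tdelta m r lam t = (\<lambda>w. \<Sum>u\<in>TB m r. t u *
      ttmul m r lam
        (ttpow m r lam (tens (tbasis (1,0)) (tbasis (1,0))) (fst u))
        (ttpow m r lam (\<lambda>z. tens (tbasis (0,0)) (tbasis (0,1)) z + tens (tbasis (0,1)) (tbasis (1,0)) z) (snd u))
        w)"

text \<open>epsilon(g) = 1, epsilon(x) = 0.\<close>
definition teps :: "nat \<Rightarrow> (nat \<times> nat \<Rightarrow> 'k::field) \<Rightarrow> 'k" where
  "teps m t = (\<Sum>i<m. t (i, 0))"

text \<open>S(g) = g^-1 = g^(m-1), S(x) = - x g^-1, S an anti-homomorphism:
  S(g^i x^j) = S(x)^j S(g)^i.\<close>
definition tanti :: "nat \<Rightarrow> nat \<Rightarrow> 'k::field \<Rightarrow> (nat \<times> nat \<Rightarrow> 'k) \<Rightarrow> nat \<times> nat \<Rightarrow> 'k" where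
  "tanti m r lam t = (\<lambda>w. \<Sum>u\<in>TB m r. t u *
      tmul m r lam
        (tpow m r lam (\<lambda>z. - tmul m r lam (tbasis (0,1)) (tbasis (m - 1, 0)) z) (snd u))
        (tpow m r lam (tbasis (m - 1, 0)) (fst u))
        w)"

definition hopf_ideal :: "nat \<Rightarrow> nat \<Rightarrow> 'k::field \<Rightarrow> (nat \<times> nat \<Rightarrow> 'k) set \<Rightarrow> bool" where
  "hopf_ideal m r lam I \<longleftrightarrow>
     I \<subseteq> Tset m r \<and> 0 \<in> I \<and>
     (\<forall>a\<in>I. \<forall>b\<in>I. a + b \<in> I) \<and>
     (\<forall>c. \<forall>a\<in>I. (\<lambda>w. c * a w) \<in> I) \<and>
     (\<forall>a\<in>I. \<forall>b\<in>Tset m r. tmul m r lam a b \<in> I \<and> tmul m r lam b a \<in> I) \<and>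
     (\<forall>a\<in>I. \<exists>ps. (\<forall>(u,v)\<in>set ps. u \<in> Tset m r \<and> v \<in> Tset m r \<and> (u \<in> I \<or> v \<in> I)) \<and>
                  tdelta m r lam a = sum_list (map (\<lambda>(u,v). tens u v) ps)) \<and>
     (\<forall>a\<in>I. teps m a = 0) \<and>
     (\<forall>a\<in>I. tanti m r lam a \<in> I)"

definition module_algebra :: "nat \<Rightarrow> nat \<Rightarrow> nat \<Rightarrow> 'k::field
     \<Rightarrow> ((nat \<times> nat \<Rightarrow> 'k) \<Rightarrow> (path \<Rightarrow> 'k) \<Rightarrow> (path \<Rightarrow> 'k)) \<Rightarrow> bool" where
  "module_algebra n m r lam \<rho> \<longleftrightarrow>
     (\<forall>t\<in>Tset m r. \<forall>a\<in>Aset n. \<rho> t a \<in> Aset n) \<and>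
     (\<forall>t\<in>Tset m r. \<forall>s\<in>Tset m r. \<forall>a\<in>Aset n. \<rho> (t + s) a = \<rho> t a + \<rho> s a) \<and>
     (\<forall>c. \<forall>t\<in>Tset m r. \<forall>a\<in>Aset n. \<rho> (\<lambda>w. c * t w) a = (\<lambda>p. c * \<rho> t a p)) \<and>
     (\<forall>t\<in>Tset m r. \<forall>a\<in>Aset n. \<forall>b\<in>Aset n. \<rho> t (a + b) = \<rho> t a + \<rho> t b) \<and>
     (\<forall>c. \<forall>t\<in>Tset m r. \<forall>a\<in>Aset n. \<rho> t (\<lambda>p. c * a p) = (\<lambda>p. c * \<rho> t a p)) \<and>
     (\<forall>t\<in>Tset m r. \<forall>s\<in>Tset m r. \<forall>a\<in>Aset n. \<rho> (tmul m r lam t s) a = \<rho> t (\<rho> s a)) \<and>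
     (\<forall>a\<in>Aset n. \<rho> (tbasis (0,0)) a = a) \<and>
     (\<forall>h\<in>Tset m r. \<forall>a\<in>Aset n. \<forall>b\<in>Aset n.
        \<rho> h (amul n a b) = (\<lambda>p. \<Sum>u\<in>TB m r \<times> TB m r.
            tdelta m r lam h u * amul n (\<rho> (tbasis (fst u)) a) (\<rho> (tbasis (snd u)) b) p)) \<and>
     (\<forall>h\<in>Tset m r. \<rho> h (aone n) = (\<lambda>p. teps m h * aone n p))"

definition inner_faithful :: "nat \<Rightarrow> nat \<Rightarrow> nat \<Rightarrow> 'k::field
     \<Rightarrow> ((nat \<times> nat \<Rightarrow> 'k) \<Rightarrow> (path \<Rightarrow> 'k) \<Rightarrow> (path \<Rightarrow> 'k)) \<Rightarrow> bool" where
  "inner_faithful n m r lam \<rho> \<longleftrightarrow>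
     \<not> (\<exists>I. hopf_ideal m r lam I \<and> (\<exists>t\<in>I. t \<noteq> 0) \<and> (\<forall>t\<in>I. \<forall>a\<in>Aset n. \<rho> t a = 0))"

abbreviation gact where "gact \<rho> \<equiv> \<rho> (tbasis (1,0))"
abbreviation xact where "xact \<rho> \<equiv> \<rho> (tbasis (0,1))"

definition linear_action :: "nat \<Rightarrow> ((nat \<times> nat \<Rightarrow> 'k::field) \<Rightarrow> (path \<Rightarrow> 'k) \<Rightarrow> (path \<Rightarrow> 'k)) \<Rightarrow> bool" where
  "linear_action n \<rho> \<longleftrightarrow>
     bij_betw (gact \<rho>) (Aset n) (Aset n) \<and>
     (\<forall>p. valid_path n p \<longrightarrow> (\<forall>q. gact \<rho> (sing p) q \<noteq> 0 \<longrightarrow> plen q = plen p)) \<and>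
     (\<forall>i<n. \<exists>j<n. gact \<rho> (vtx i) = vtx j) \<and>
     (\<forall>i<n. \<forall>q. xact \<rho> (vtx i) q \<noteq> 0 \<longrightarrow> plen q = 0) \<and>
     (\<forall>a. aidx a < n \<longrightarrow> (\<forall>q. xact \<rho> (arrow a) q \<noteq> 0 \<longrightarrow> plen q \<le> 1))"

text \<open>Quiver-Taft map, on the span of vertices and arrows: sigma(e_i) = 0 and
  sigma(a) = x.a - gamma_t(a) a + gamma_s(a) lam^-1 (g.a).\<close>
definition sigma_arr :: "nat \<Rightarrow> 'k::field \<Rightarrow> (nat \<Rightarrow> 'k)
     \<Rightarrow> ((nat \<times> nat \<Rightarrow> 'k) \<Rightarrow> (path \<Rightarrow> 'k) \<Rightarrow> (path \<Rightarrow> 'k)) \<Rightarrow> arr \<Rightarrow> path \<Rightarrow> 'k" where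
  "sigma_arr n lam \<gamma> \<rho> a = (\<lambda>p. xact \<rho> (arrow a) p - \<gamma> (atgt n a) * arrow a p
                                 + \<gamma> (asrc n a) * inverse lam * gact \<rho> (arrow a) p)"

definition quiver_taft :: "nat \<Rightarrow> 'k::field \<Rightarrow> (nat \<Rightarrow> 'k)
     \<Rightarrow> ((nat \<times> nat \<Rightarrow> 'k) \<Rightarrow> (path \<Rightarrow> 'k) \<Rightarrow> (path \<Rightarrow> 'k)) \<Rightarrow> (path \<Rightarrow> 'k) \<Rightarrow> path \<Rightarrow> 'k" where
  "quiver_taft n lam \<gamma> \<rho> f = (\<lambda>p. \<Sum>i<n.
       f (Arrs [Ar i]) * sigma_arr n lam \<gamma> \<rho> (Ar i) p
     + f (Arrs [As i]) * sigma_arr n lam \<gamma> \<rho> (As i) p)"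

end

theory Submission
  imports Defs
begin


lemma finite_TB[simp]: "finite (TB m r)" by (simp add: TB_def)

lemma scoef_unit_right:
  assumes "u \<in> TB m r"
  shows "scoef m r lam u (0,0) w = (if u = w then 1 else 0)"
  using assms by (cases u; cases w) (auto simp: scoef_def TB_def)

lemma scoef_unit_left:
  assumes "u \<in> TB m r"
  shows "scoef m r lam (0,0) u w = (if u = w then 1 else 0)"
  using assms by (cases u; cases w) (auto simp: scoef_def TB_def)

lemma ttmul_one_right:
  assumes "(0,0) \<in> TB m r"
  shows "ttmul m r lam X (tens (tbasis (0,0)) (tbasis (0,0))) w
        = (if w \<in> TB m r \<times> TB m r then X w else 0)"
proof -
  have inner: "(\<Sum>v\<in>TB m r \<times> TB m r. X u * tens (tbasis (0,0)) (tbasis (0,0)) v *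
        scoef m r lam (fst u) (fst v) (fst w) * scoef m r lam (snd u) (snd v) (snd w))
      = X u * scoef m r lam (fst u) (0,0) (fst w) * scoef m r lam (snd u) (0,0) (snd w)" for u
  proof -
    have "(\<Sum>v\<in>TB m r \<times> TB m r. X u * tens (tbasis (0,0)) (tbasis (0,0)) v *
        scoef m r lam (fst u) (fst v) (fst w) * scoef m r lam (snd u) (snd v) (snd w))
      = (\<Sum>v\<in>TB m r \<times> TB m r. if v = ((0,0),(0,0)) then
           X u * scoef m r lam (fst u) (0,0) (fst w) * scoef m r lam (snd u) (0,0) (snd w) else 0)"
      by (rule sum.cong) (auto simp: tens_def tbasis_def)
    also have "\<dots> = X u * scoef m r lam (fst u) (0,0) (fst w) * scoef m r lam (snd u) (0,0) (snd w)"
      using assms by (simp add: sum.delta sum.delta')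
    finally show ?thesis .
  qed
  have "ttmul m r lam X (tens (tbasis (0,0)) (tbasis (0,0))) w
      = (\<Sum>u\<in>TB m r \<times> TB m r. X u * scoef m r lam (fst u) (0,0) (fst w) * scoef m r lam (snd u) (0,0) (snd w))"
    unfolding ttmul_def using inner by simp
  also have "\<dots> = (\<Sum>u\<in>TB m r \<times> TB m r. if u = w then X w else 0)"
    by (rule sum.cong) (auto simp: scoef_unit_right prod_eq_iff)
  also have "\<dots> = (if w \<in> TB m r \<times> TB m r then X w else 0)"
    by (simp add: sum.delta sum.delta')
  finally show ?thesis .
qed

lemma ttmul_one_left:
  assumes "(0,0) \<in> TB m r"
  shows "ttmul m r lam (tens (tbasis (0,0)) (tbasis (0,0))) X w
        = (if w \<in> TB m r \<times> TB m r then X w else 0)"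
proof -
  have inner: "(\<Sum>u\<in>TB m r \<times> TB m r. tens (tbasis (0,0)) (tbasis (0,0)) u * X v *
        scoef m r lam (fst u) (fst v) (fst w) * scoef m r lam (snd u) (snd v) (snd w))
      = X v * scoef m r lam (0,0) (fst v) (fst w) * scoef m r lam (0,0) (snd v) (snd w)" for v
  proof -
    have "(\<Sum>u\<in>TB m r \<times> TB m r. tens (tbasis (0,0)) (tbasis (0,0)) u * X v *
        scoef m r lam (fst u) (fst v) (fst w) * scoef m r lam (snd u) (snd v) (snd w))
      = (\<Sum>u\<in>TB m r \<times> TB m r. if u = ((0,0),(0,0)) then
           X v * scoef m r lam (0,0) (fst v) (fst w) * scoef m r lam (0,0) (snd v) (snd w) else 0)"
      by (rule sum.cong) (auto simp: tens_def tbasis_def)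
    also have "\<dots> = X v * scoef m r lam (0,0) (fst v) (fst w) * scoef m r lam (0,0) (snd v) (snd w)"
      using assms by (simp add: sum.delta sum.delta')
    finally show ?thesis .
  qed
  have "ttmul m r lam (tens (tbasis (0,0)) (tbasis (0,0))) X w
      = (\<Sum>v\<in>TB m r \<times> TB m r. X v * scoef m r lam (0,0) (fst v) (fst w) * scoef m r lam (0,0) (snd v) (snd w))"
    unfolding ttmul_def by (subst sum.swap) (simp add: inner)
  also have "\<dots> = (\<Sum>v\<in>TB m r \<times> TB m r. if v = w then X w else 0)"
    by (rule sum.cong) (auto simp: scoef_unit_left prod_eq_iff)
  also have "\<dots> = (if w \<in> TB m r \<times> TB m r then X w else 0)"
    by (simp add: sum.delta sum.delta')
  finally show ?thesis .
qed

definition Bx :: "(nat \<times> nat) \<times> (nat \<times> nat) \<Rightarrow> 'k::field" where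
  "Bx = (\<lambda>z. tens (tbasis (0,0)) (tbasis (0,1)) z + tens (tbasis (0,1)) (tbasis (1,0)) z)"

lemma tdelta_x:
  assumes "0 < m" "1 < r"
  shows "tdelta m r lam (tbasis (0,1)) w = (if w \<in> TB m r \<times> TB m r then (Bx w :: 'k::field) else 0)"
proof -
  have T: "(0,0) \<in> TB m r" "(0,1) \<in> TB m r" using assms by (auto simp: TB_def)
  have "tdelta m r lam (tbasis (0,1)) w = (\<Sum>u\<in>TB m r. if u = (0,1) then
      ttmul m r lam
        (ttpow m r lam (tens (tbasis (1,0)) (tbasis (1,0))) (fst u))
        (ttpow m r lam (\<lambda>z. tens (tbasis (0,0)) (tbasis (0,1)) z + tens (tbasis (0,1)) (tbasis (1,0)) z) (snd u))
        w else (0::'k))"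
    unfolding tdelta_def by (rule sum.cong) (auto simp: tbasis_def)
  also have "\<dots> = ttmul m r lam (tens (tbasis (0,0)) (tbasis (0,0)))
        (ttmul m r lam Bx (tens (tbasis (0,0)) (tbasis (0,0)))) w"
    using T by (simp add: sum.delta sum.delta' ttpow_def Bx_def)
  also have "\<dots> = (if w \<in> TB m r \<times> TB m r then Bx w else 0)"
    using T by (simp add: ttmul_one_left ttmul_one_right)
  finally show ?thesis .
qed


lemma pcat_triv_left: "pcat n (Triv v) q = (if v = psrc n q then Some q else None)"
  by (simp add: pcat_def)

lemma pcat_triv_right: "pcat n p (Triv v) = (if ptgt n p = v then Some p else None)"
  by (cases p) (auto simp: pcat_def)

lemma amul_vleft:
  assumes fin: "finite {q. f q \<noteq> 0}" "finite {q. h q \<noteq> 0}"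
    and tv: "\<forall>q. f q \<noteq> 0 \<longrightarrow> (\<exists>v. q = Triv v)"
  shows "amul n f h p = f (Triv (psrc n p)) * h p"
proof -
  have inner: "(\<Sum>p2\<in>{q. h q \<noteq> 0}. if pcat n p1 p2 = Some p then f p1 * h p2 else 0)
      = (if p1 = Triv (psrc n p) then f p1 * h p else 0)" if p1f: "p1 \<in> {q. f q \<noteq> 0}" for p1
  proof -
    obtain v where v: "p1 = Triv v" using tv p1f by blast
    have "(\<Sum>p2\<in>{q. h q \<noteq> 0}. if pcat n p1 p2 = Some p then f p1 * h p2 else 0)
        = (\<Sum>p2\<in>{q. h q \<noteq> 0}. if p2 = p then (if v = psrc n p then f p1 * h p else 0) else 0)"
      by (rule sum.cong) (auto simp: v pcat_triv_left)
    also have "\<dots> = (if p1 = Triv (psrc n p) then f p1 * h p else 0)"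
      using fin by (auto simp: sum.delta v)
    finally show ?thesis .
  qed
  have "amul n f h p = (\<Sum>p1\<in>{q. f q \<noteq> 0}. if p1 = Triv (psrc n p) then f p1 * h p else 0)"
    unfolding amul_def using inner by (intro sum.cong) auto
  also have "\<dots> = f (Triv (psrc n p)) * h p"
    using fin by (auto simp: sum.delta)
  finally show ?thesis .
qed

lemma amul_vright:
  assumes fin: "finite {q. f q \<noteq> 0}" "finite {q. h q \<noteq> 0}"
    and tv: "\<forall>q. h q \<noteq> 0 \<longrightarrow> (\<exists>v. q = Triv v)"
  shows "amul n f h p = f p * h (Triv (ptgt n p))"
proof -
  have inner: "(\<Sum>p2\<in>{q. h q \<noteq> 0}. if pcat n p1 p2 = Some p then f p1 * h p2 else 0)
      = (if p1 = p then f p * h (Triv (ptgt n p)) else 0)" for p1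
  proof -
    have "(\<Sum>p2\<in>{q. h q \<noteq> 0}. if pcat n p1 p2 = Some p then f p1 * h p2 else 0)
        = (\<Sum>p2\<in>{q. h q \<noteq> 0}. if p2 = Triv (ptgt n p) then (if p1 = p then f p * h p2 else 0) else 0)"
    proof (rule sum.cong)
      fix p2 assume "p2 \<in> {q. h q \<noteq> 0}"
      then obtain v where v: "p2 = Triv v" using tv by auto
      show "(if pcat n p1 p2 = Some p then f p1 * h p2 else 0) =
          (if p2 = Triv (ptgt n p) then (if p1 = p then f p * h p2 else 0) else 0)"
        by (auto simp: v pcat_triv_right)
    qed simp
    also have "\<dots> = (if p1 = p then f p * h (Triv (ptgt n p)) else 0)"
      using fin by (auto simp: sum.delta)
    finally show ?thesis .
  qed
  have "amul n f h p = (\<Sum>p1\<in>{q. f q \<noteq> 0}. if p1 = p then f p * h (Triv (ptgt n p)) else 0)"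
    unfolding amul_def using inner by (intro sum.cong) auto
  also have "\<dots> = f p * h (Triv (ptgt n p))"
    using fin by (auto simp: sum.delta)
  finally show ?thesis .
qed


definition gimg :: "nat \<Rightarrow> nat \<Rightarrow> arr \<Rightarrow> arr" where
  "gimg n d a = (case a of Ar i \<Rightarrow> Ar ((i + d) mod n) | As i \<Rightarrow> As ((i + d) mod n))"

definition gmu :: "(nat \<Rightarrow> 'k) \<Rightarrow> (nat \<Rightarrow> 'k) \<Rightarrow> arr \<Rightarrow> 'k" where
  "gmu \<mu> \<mu>s a = (case a of Ar i \<Rightarrow> \<mu> i | As i \<Rightarrow> \<mu>s i)"

lemma vtx_eval: "vtx i p = (if p = Triv i then 1 else 0)" by (simp add: vtx_def sing_def)
lemma arrow_eval: "arrow a p = (if p = Arrs [a] then 1 else 0)" by (simp add: arrow_def sing_def)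

lemma Bx_eval: "Bx u = (if u = ((0,0),(0,1)) then 1 else 0) + (if u = ((0,1),(1,0)) then 1 else 0)"
  by (cases u) (auto simp: Bx_def tens_def tbasis_def)

declare One_nat_def [simp del]

locale S =
  fixes n m r d :: nat and lam :: "'k::field" and \<mu> \<mu>s \<gamma> :: "nat \<Rightarrow> 'k"
    and \<rho> :: "(nat \<times> nat \<Rightarrow> 'k) \<Rightarrow> (path \<Rightarrow> 'k) \<Rightarrow> (path \<Rightarrow> 'k)"
  assumes n3: "n \<ge> 3"
    and r1: "r > 1" and m0: "m > 0" and rm: "r dvd m"
    and modalg: "module_algebra n m r lam \<rho>"
    and lin: "linear_action n \<rho>"
    and d: "0 < d" "d \<le> n - 1"
    and mu: "\<forall>i<n. \<mu> i \<noteq> 0 \<and> \<mu>s i \<noteq> 0"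
    and rot_e: "\<forall>i<n. gact \<rho> (vtx i) = vtx ((i + d) mod n)"
    and rot_a: "\<forall>i<n. gact \<rho> (arrow (Ar i)) = (\<lambda>p. \<mu> i * arrow (Ar ((i + d) mod n)) p)"
    and rot_as: "\<forall>i<n. gact \<rho> (arrow (As i)) = (\<lambda>p. \<mu>s i * arrow (As ((i + d) mod n)) p)"
    and gam: "\<forall>i<n. xact \<rho> (vtx i) = (\<lambda>p. \<gamma> i * vtx i p - \<gamma> i * inverse lam * vtx ((i + d) mod n) p)"
begin

lemma m2: "m \<ge> 2" proof - have "r \<le> m" using rm m0 by (rule dvd_imp_le) then show ?thesis using r1 by linarith qed

lemma TBs: "(0,0) \<in> TB m r" "(0,1) \<in> TB m r" "(1,0) \<in> TB m r"
  using m2 r1 by (auto simp: TB_def)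

lemma tbT: "u \<in> TB m r \<Longrightarrow> tbasis u \<in> Tset m r"
  by (auto simp: Tset_def tbasis_def)

lemma fin_A: "f \<in> Aset n \<Longrightarrow> finite {q. f q \<noteq> 0}" by (simp add: Aset_def)

lemma vtx_A: "i < n \<Longrightarrow> vtx i \<in> Aset n"
proof -
  assume "i < n"
  have "{q. vtx i q \<noteq> (0::'k)} = {Triv i}" by (auto simp: vtx_eval)
  then show ?thesis using \<open>i < n\<close> by (auto simp: Aset_def vtx_eval)
qed

lemma arrow_A: "aidx a < n \<Longrightarrow> arrow a \<in> Aset n"
proof -
  assume "aidx a < n"
  have "{q. arrow a q \<noteq> (0::'k)} = {Arrs [a]}" by (auto simp: arrow_eval)
  then show ?thesis using \<open>aidx a < n\<close> by (auto simp: Aset_def arrow_eval)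
qed

lemma scale_A: "f \<in> Aset n \<Longrightarrow> (\<lambda>p. c * f p) \<in> Aset n"
  unfolding Aset_def by (auto elim: finite_subset[rotated])

lemma add_A: "f \<in> Aset n \<Longrightarrow> h \<in> Aset n \<Longrightarrow> f + h \<in> Aset n"
proof -
  assume a: "f \<in> Aset n" "h \<in> Aset n"
  have "{q. (f + h) q \<noteq> 0} \<subseteq> {q. f q \<noteq> 0} \<union> {q. h q \<noteq> 0}" by auto
  then show ?thesis using a unfolding Aset_def by (auto elim: finite_subset)
qed

lemma nlt: "0 < n" using n3 by simp

lemma gimg_props:
  assumes "aidx a < n"
  shows "aidx (gimg n d a) < n" "asrc n (gimg n d a) = (asrc n a + d) mod n"
        "atgt n (gimg n d a) = (atgt n a + d) mod n"
  using assms nlt by (cases a; simp add: gimg_def; metis mod_Suc_eq mod_add_left_eq add_Suc)+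

lemma src_lt: "aidx a < n \<Longrightarrow> asrc n a < n" using nlt by (cases a) auto
lemma tgt_lt: "aidx a < n \<Longrightarrow> atgt n a < n" using nlt by (cases a) auto

lemma g_arrow: "aidx a < n \<Longrightarrow> gact \<rho> (arrow a) = (\<lambda>p. gmu \<mu> \<mu>s a * arrow (gimg n d a) p)"
  using rot_a rot_as by (cases a) (auto simp: gmu_def gimg_def)

lemma gmu_nz: "aidx a < n \<Longrightarrow> gmu \<mu> \<mu>s a \<noteq> 0"
  using mu by (cases a) (auto simp: gmu_def)

lemma MA_closed: "\<forall>t\<in>Tset m r. \<forall>a\<in>Aset n. \<rho> t a \<in> Aset n"
  using modalg unfolding module_algebra_def by (elim conjE) assumption
lemma MA_scal: "\<forall>c. \<forall>t\<in>Tset m r. \<forall>a\<in>Aset n. \<rho> (\<lambda>w. c * t w) a = (\<lambda>p. c * \<rho> t a p)"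
  using modalg unfolding module_algebra_def by (elim conjE) assumption
lemma MA_add2: "\<forall>t\<in>Tset m r. \<forall>a\<in>Aset n. \<forall>b\<in>Aset n. \<rho> t (a + b) = \<rho> t a + \<rho> t b"
  using modalg unfolding module_algebra_def by (elim conjE) assumption
lemma MA_scal2: "\<forall>c. \<forall>t\<in>Tset m r. \<forall>a\<in>Aset n. \<rho> t (\<lambda>p. c * a p) = (\<lambda>p. c * \<rho> t a p)"
  using modalg unfolding module_algebra_def by (elim conjE) assumption
lemma MA_mul: "\<forall>t\<in>Tset m r. \<forall>s\<in>Tset m r. \<forall>a\<in>Aset n. \<rho> (tmul m r lam t s) a = \<rho> t (\<rho> s a)"
  using modalg unfolding module_algebra_def by (elim conjE) assumption
lemma MA_one: "\<forall>a\<in>Aset n. \<rho> (tbasis (0,0)) a = a"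
  using modalg unfolding module_algebra_def by (elim conjE) assumption
lemma MA_prod: "\<forall>h\<in>Tset m r. \<forall>a\<in>Aset n. \<forall>b\<in>Aset n.
        \<rho> h (amul n a b) = (\<lambda>p. \<Sum>u\<in>TB m r \<times> TB m r.
            tdelta m r lam h u * amul n (\<rho> (tbasis (fst u)) a) (\<rho> (tbasis (snd u)) b) p)"
  using modalg unfolding module_algebra_def by (elim conjE) assumption

lemma x_A: "f \<in> Aset n \<Longrightarrow> xact \<rho> f \<in> Aset n"
  using MA_closed TBs tbT by blast

lemma g_A: "f \<in> Aset n \<Longrightarrow> gact \<rho> f \<in> Aset n"
  using MA_closed TBs tbT by blast

lemma one_act: "f \<in> Aset n \<Longrightarrow> \<rho> (tbasis (0,0)) f = f"
  using MA_one by blast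

lemma xprod:
  assumes "f \<in> Aset n" "h \<in> Aset n"
  shows "xact \<rho> (amul n f h) p = amul n f (xact \<rho> h) p + amul n (xact \<rho> f) (gact \<rho> h) p"
proof -
  have "xact \<rho> (amul n f h) = (\<lambda>p. \<Sum>u\<in>TB m r \<times> TB m r.
            tdelta m r lam (tbasis (0,1)) u * amul n (\<rho> (tbasis (fst u)) f) (\<rho> (tbasis (snd u)) h) p)"
    using MA_prod assms tbT[OF TBs(2)] by blast
  then have "xact \<rho> (amul n f h) p = (\<Sum>u\<in>TB m r \<times> TB m r.
            tdelta m r lam (tbasis (0,1)) u * amul n (\<rho> (tbasis (fst u)) f) (\<rho> (tbasis (snd u)) h) p)"
    by simp
  also have "\<dots> = (\<Sum>u\<in>TB m r \<times> TB m r.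
       (if u = ((0,0),(0,1)) then amul n (\<rho> (tbasis (fst u)) f) (\<rho> (tbasis (snd u)) h) p else 0)
     + (if u = ((0,1),(1,0)) then amul n (\<rho> (tbasis (fst u)) f) (\<rho> (tbasis (snd u)) h) p else 0))"
  proof (rule sum.cong)
    fix u assume "u \<in> TB m r \<times> TB m r"
    then show "tdelta m r lam (tbasis (0,1)) u * amul n (\<rho> (tbasis (fst u)) f) (\<rho> (tbasis (snd u)) h) p =
       (if u = ((0,0),(0,1)) then amul n (\<rho> (tbasis (fst u)) f) (\<rho> (tbasis (snd u)) h) p else 0)
     + (if u = ((0,1),(1,0)) then amul n (\<rho> (tbasis (fst u)) f) (\<rho> (tbasis (snd u)) h) p else 0)"
    proof -
      have "tdelta m r lam (tbasis (0,1)) u = (Bx u :: 'k)" using tdelta_x[OF m0 r1, of lam u] \<open>u \<in> _\<close> by simp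
      then show ?thesis by (simp only: Bx_eval distrib_right) simp
    qed
  qed simp
  also have "\<dots> = amul n f (xact \<rho> h) p + amul n (xact \<rho> f) (gact \<rho> h) p"
    using TBs by (simp add: sum.distrib sum.delta one_act assms)
  finally show ?thesis .
qed

end


context S begin

lemma neq_shift: "x < n \<Longrightarrow> (x + d) mod n \<noteq> x"
proof -
  assume x: "x < n"
  show ?thesis
  proof (cases "x + d < n")
    case True then show ?thesis using d by simp
  next
    case False
    then have "(x + d) mod n = (x + d - n) mod n" by (simp add: le_mod_geq)
    also have "\<dots> = x + d - n" using x d False by simp
    finally show ?thesis using d False by linarith
  qed
qed

lemma xv_supp: "i < n \<Longrightarrow> \<forall>q. xact \<rho> (vtx i) q \<noteq> 0 \<longrightarrow> (\<exists>v. q = Triv v)"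
  using gam by (auto simp: vtx_eval split: if_splits)

lemma E1:
  assumes a: "aidx a < n"
  shows "xact \<rho> (arrow a) p = (if psrc n p = asrc n a then xact \<rho> (arrow a) p else 0)
     + (\<gamma> (asrc n a) * (if psrc n p = asrc n a then 1 else 0)
        - \<gamma> (asrc n a) * inverse lam * (if psrc n p = (asrc n a + d) mod n then 1 else 0))
       * (gmu \<mu> \<mu>s a * arrow (gimg n d a) p)"
proof -
  let ?s = "asrc n a"
  have sl: "?s < n" using src_lt a .
  have aa: "amul n (vtx ?s) (arrow a) = arrow a"
  proof
    fix p
    have "amul n (vtx ?s) (arrow a) p = vtx ?s (Triv (psrc n p)) * arrow a p"
      by (rule amul_vleft) (auto simp: fin_A vtx_A arrow_A sl a vtx_eval split: if_splits)
    then show "amul n (vtx ?s) (arrow a) p = arrow a p" by (auto simp: vtx_eval arrow_eval)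
  qed
  have "xact \<rho> (arrow a) p = xact \<rho> (amul n (vtx ?s) (arrow a)) p" by (simp add: aa)
  also have "\<dots> = amul n (vtx ?s) (xact \<rho> (arrow a)) p + amul n (xact \<rho> (vtx ?s)) (gact \<rho> (arrow a)) p"
    by (rule xprod) (auto simp: vtx_A arrow_A sl a)
  also have "amul n (vtx ?s) (xact \<rho> (arrow a)) p = vtx ?s (Triv (psrc n p)) * xact \<rho> (arrow a) p"
    by (rule amul_vleft) (auto simp: fin_A x_A vtx_A arrow_A sl a vtx_eval split: if_splits)
  also have "amul n (xact \<rho> (vtx ?s)) (gact \<rho> (arrow a)) p = xact \<rho> (vtx ?s) (Triv (psrc n p)) * gact \<rho> (arrow a) p"
    by (rule amul_vleft) (auto simp: fin_A x_A g_A vtx_A arrow_A sl a intro: xv_supp[OF sl, rule_format])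
  finally have eq: "xact \<rho> (arrow a) p = vtx ?s (Triv (psrc n p)) * xact \<rho> (arrow a) p
      + xact \<rho> (vtx ?s) (Triv (psrc n p)) * gact \<rho> (arrow a) p" .
  have v2: "xact \<rho> (vtx ?s) (Triv (psrc n p)) = \<gamma> ?s * (if psrc n p = ?s then 1 else 0)
        - \<gamma> ?s * inverse lam * (if psrc n p = (?s + d) mod n then 1 else 0)"
    using gam sl by (simp add: vtx_eval)
  have "vtx ?s (Triv (psrc n p)) * xact \<rho> (arrow a) p
      + xact \<rho> (vtx ?s) (Triv (psrc n p)) * gact \<rho> (arrow a) p = (if psrc n p = asrc n a then xact \<rho> (arrow a) p else 0)
     + (\<gamma> (asrc n a) * (if psrc n p = asrc n a then 1 else 0)
        - \<gamma> (asrc n a) * inverse lam * (if psrc n p = (asrc n a + d) mod n then 1 else 0))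
       * (gmu \<mu> \<mu>s a * arrow (gimg n d a) p)"
    unfolding v2 g_arrow[OF a] by (simp add: vtx_eval)
  from trans[OF eq this] show ?thesis .
qed

lemma E2:
  assumes a: "aidx a < n"
  shows "xact \<rho> (arrow a) p = arrow a p * (\<gamma> (atgt n a) * (if ptgt n p = atgt n a then 1 else 0)
        - \<gamma> (atgt n a) * inverse lam * (if ptgt n p = (atgt n a + d) mod n then 1 else 0))
      + xact \<rho> (arrow a) p * (if ptgt n p = (atgt n a + d) mod n then 1 else 0)"
proof -
  let ?t = "atgt n a"
  have tl: "?t < n" using tgt_lt a .
  have aa: "amul n (arrow a) (vtx ?t) = arrow a"
  proof
    fix p
    have "amul n (arrow a) (vtx ?t) p = arrow a p * vtx ?t (Triv (ptgt n p))"
      by (rule amul_vright) (auto simp: fin_A vtx_A arrow_A tl a vtx_eval split: if_splits)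
    then show "amul n (arrow a) (vtx ?t) p = arrow a p" by (auto simp: vtx_eval arrow_eval)
  qed
  have "xact \<rho> (arrow a) p = xact \<rho> (amul n (arrow a) (vtx ?t)) p" by (simp add: aa)
  also have "\<dots> = amul n (arrow a) (xact \<rho> (vtx ?t)) p + amul n (xact \<rho> (arrow a)) (gact \<rho> (vtx ?t)) p"
    by (rule xprod) (auto simp: vtx_A arrow_A tl a)
  also have "amul n (arrow a) (xact \<rho> (vtx ?t)) p = arrow a p * xact \<rho> (vtx ?t) (Triv (ptgt n p))"
    by (rule amul_vright) (auto simp: fin_A x_A vtx_A arrow_A tl a intro: xv_supp[OF tl, rule_format])
  also have "amul n (xact \<rho> (arrow a)) (gact \<rho> (vtx ?t)) p = xact \<rho> (arrow a) p * gact \<rho> (vtx ?t) (Triv (ptgt n p))"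
    by (rule amul_vright) (auto simp: fin_A x_A g_A vtx_A arrow_A tl a rot_e vtx_eval split: if_splits)
  finally have eq: "xact \<rho> (arrow a) p = arrow a p * xact \<rho> (vtx ?t) (Triv (ptgt n p))
      + xact \<rho> (arrow a) p * gact \<rho> (vtx ?t) (Triv (ptgt n p))" .
  have v2: "xact \<rho> (vtx ?t) (Triv (ptgt n p)) = \<gamma> ?t * (if ptgt n p = ?t then 1 else 0)
        - \<gamma> ?t * inverse lam * (if ptgt n p = (?t + d) mod n then 1 else 0)"
    using gam tl by (simp add: vtx_eval)
  have v3: "gact \<rho> (vtx ?t) (Triv (ptgt n p)) = (if ptgt n p = (?t + d) mod n then 1 else 0)"
    using rot_e tl by (simp add: vtx_eval)
  from eq show ?thesis unfolding v2 v3 .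
qed

lemma sig_eval: "aidx a < n \<Longrightarrow> sigma_arr n lam \<gamma> \<rho> a p = xact \<rho> (arrow a) p - \<gamma> (atgt n a) * arrow a p
    + \<gamma> (asrc n a) * inverse lam * (gmu \<mu> \<mu>s a * arrow (gimg n d a) p)"
  by (simp add: sigma_arr_def g_arrow)

lemma sig_supp:
  assumes a: "aidx a < n" and nz: "sigma_arr n lam \<gamma> \<rho> a p \<noteq> 0"
  shows "psrc n p = asrc n a \<and> ptgt n p = (atgt n a + d) mod n \<and> valid_path n p \<and> plen p \<le> 1"
proof -
  note e1 = E1[OF a, of p] and e2 = E2[OF a, of p] and se = sig_eval[OF a, of p]
  have ss: "(asrc n a + d) mod n \<noteq> asrc n a" using neq_shift src_lt a by blast
  have tt: "(atgt n a + d) mod n \<noteq> atgt n a" using neq_shift tgt_lt a by blast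
  have g1: "psrc n (Arrs [gimg n d a]) = (asrc n a + d) mod n" using gimg_props a by simp
  have g2: "ptgt n (Arrs [gimg n d a]) = (atgt n a + d) mod n" using gimg_props a by simp
  have P1: "psrc n p = asrc n a"
  proof (rule ccontr)
    assume ne: "psrc n p \<noteq> asrc n a"
    then have pa: "p \<noteq> Arrs [a]" by auto
    from e1 have "xact \<rho> (arrow a) p = 0 + (\<gamma> (asrc n a) * 0
        - \<gamma> (asrc n a) * inverse lam * (if psrc n p = (asrc n a + d) mod n then 1 else 0))
       * (gmu \<mu> \<mu>s a * arrow (gimg n d a) p)"
      by (simp only: if_not_P[OF ne])
    then have Fp: "xact \<rho> (arrow a) p = - (\<gamma> (asrc n a) * inverse lam * (gmu \<mu> \<mu>s a * arrow (gimg n d a) p))"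
      using g1 by (cases "p = Arrs [gimg n d a]") (simp_all add: arrow_eval)
    have "arrow a p = (0::'k)" using pa by (simp add: arrow_eval)
    then show False using nz se Fp by simp
  qed
  have P2: "ptgt n p = (atgt n a + d) mod n"
  proof (rule ccontr)
    assume ne: "ptgt n p \<noteq> (atgt n a + d) mod n"
    then have pa: "p \<noteq> Arrs [gimg n d a]" using g2 by auto
    from e2 have "xact \<rho> (arrow a) p = arrow a p * (\<gamma> (atgt n a) * (if ptgt n p = atgt n a then 1 else 0))"
      by (simp only: if_not_P[OF ne] mult_zero_right mult_zero_left add_0_right diff_zero)
    then have Fp: "xact \<rho> (arrow a) p = \<gamma> (atgt n a) * arrow a p"
      by (cases "p = Arrs [a]") (simp_all add: arrow_eval)
    have "arrow (gimg n d a) p = (0::'k)" using pa by (simp add: arrow_eval)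
    then show False using nz se Fp by simp
  qed
  have VP: "valid_path n p \<and> plen p \<le> 1"
  proof (cases "xact \<rho> (arrow a) p = 0")
    case True
    have "p = Arrs [a] \<or> p = Arrs [gimg n d a]"
    proof (rule ccontr)
      assume "\<not> (p = Arrs [a] \<or> p = Arrs [gimg n d a])"
      then have "arrow a p = (0::'k)" "arrow (gimg n d a) p = (0::'k)" by (auto simp: arrow_eval)
      then show False using nz se True by simp
    qed
    then show ?thesis using a gimg_props(1)[OF a] by auto
  next
    case False
    have "xact \<rho> (arrow a) \<in> Aset n" using x_A arrow_A a by blast
    then have "valid_path n p" using False by (auto simp: Aset_def)
    moreover have "plen p \<le> 1" using lin a False unfolding linear_action_def by blast
    ultimately show ?thesis by simp
  qed
  show ?thesis using P1 P2 VP by simp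
qed

end


lemma dvd_close:
  fixes n k :: int and d :: nat
  assumes dv: "n dvd (int d - k)" and "0 < d" "int d < n" "3 \<le> n" "k \<in> {-2,0,2}"
  shows "(k = 2 \<and> d = 2) \<or> (k = -2 \<and> int d = n - 2)"
proof -
  obtain q where q: "int d - k = n * q" using dv by (auto elim: dvdE)
  have kb: "-2 \<le> k" "k \<le> 2" using assms(5) by auto
  have "q \<ge> 0"
  proof (rule ccontr)
    assume "\<not> q \<ge> 0" then have "q \<le> -1" by simp
    then have "n * q \<le> n * (-1)" using assms by (intro mult_left_mono) auto
    then show False using q assms kb by linarith
  qed
  moreover have "q \<le> 1"
  proof (rule ccontr)
    assume "\<not> q \<le> 1" then have "q \<ge> 2" by simp
    then have "n * q \<ge> n * 2" using assms by (intro mult_left_mono) auto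
    then show False using q assms kb by linarith
  qed
  ultimately have "q = 0 \<or> q = 1" by auto
  then show ?thesis using q assms by auto
qed

lemma adjc:
  fixes x y n :: nat
  assumes "y = Suc x mod n \<or> x = Suc y mod n"
  shows "\<exists>e\<in>{1,-1::int}. int n dvd (int y - int x - e)"
proof (cases "y = Suc x mod n")
  case True
  then have "int y = (int x + 1) mod int n" by (simp add: zmod_int ac_simps)
  then have "int n dvd (int y - int x - 1)"
    by (metis diff_diff_eq mod_mod_trivial mod_eq_dvd_iff)
  then show ?thesis by auto
next
  case False
  then have "x = Suc y mod n" using assms by auto
  then have "int x = (int y + 1) mod int n" by (simp add: zmod_int ac_simps)
  then have "int n dvd (int x - int y - 1)"
    by (metis diff_diff_eq mod_mod_trivial mod_eq_dvd_iff)
  moreover have "int y - int x - (-1) = -(int x - int y - 1)" by simp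
  ultimately have "int n dvd (int y - int x - (-1))" by (simp only: dvd_minus_iff)
  then show ?thesis by blast
qed

lemma addc:
  fixes x y n d :: nat
  assumes "y = (x + d) mod n"
  shows "int n dvd (int y - int x - int d)"
proof -
  have "int y = (int x + int d) mod int n" using assms by (simp add: zmod_int)
  then show ?thesis by (metis diff_diff_eq mod_mod_trivial mod_eq_dvd_iff)
qed

lemma arith_core:
  fixes s t u w n d :: nat
  assumes "3 \<le> n" "0<d" "d<n"
    "t = Suc s mod n \<or> s = Suc t mod n"
    "u = Suc s mod n \<or> s = Suc u mod n"
    "w = Suc s mod n \<or> s = Suc w mod n"
    "u = (t+d) mod n" "w = (u+d) mod n"
  shows "n = 4 \<and> d = 2"
proof -
  obtain e1 where e1: "e1 \<in> {1,-1::int}" "int n dvd (int t - int s - e1)" using adjc[OF assms(4)] by blast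
  obtain e2 where e2: "e2 \<in> {1,-1::int}" "int n dvd (int u - int s - e2)" using adjc[OF assms(5)] by blast
  obtain e3 where e3: "e3 \<in> {1,-1::int}" "int n dvd (int w - int s - e3)" using adjc[OF assms(6)] by blast
  have a1: "int n dvd (int u - int t - int d)" using addc[OF assms(7)] .
  have a2: "int n dvd (int w - int u - int d)" using addc[OF assms(8)] .
  have "int n dvd ((int t - int s - e1) - (int u - int s - e2) + (int u - int t - int d))"
    using dvd_add[OF dvd_diff[OF e1(2) e2(2)] a1] .
  moreover have "(int t - int s - e1) - (int u - int s - e2) + (int u - int t - int d) = -(int d - (e2 - e1))" by simp
  ultimately have k1: "int n dvd (int d - (e2 - e1))" by (simp only: dvd_minus_iff)
  have "int n dvd ((int u - int s - e2) - (int w - int s - e3) + (int w - int u - int d))"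
    using dvd_add[OF dvd_diff[OF e2(2) e3(2)] a2] .
  moreover have "(int u - int s - e2) - (int w - int s - e3) + (int w - int u - int d) = -(int d - (e3 - e2))" by simp
  ultimately have k2: "int n dvd (int d - (e3 - e2))" by (simp only: dvd_minus_iff)
  have dn: "int d < int n" "3 \<le> int n" using assms by auto
  have ks1: "e2 - e1 \<in> {-2,0,2::int}" using e1(1) e2(1) by auto
  have ks2: "e3 - e2 \<in> {-2,0,2::int}" using e2(1) e3(1) by auto
  have r1: "(e2 - e1 = 2 \<and> d = 2) \<or> (e2 - e1 = -2 \<and> int d = int n - 2)"
    by (rule dvd_close[OF k1 assms(2) dn ks1])
  have r2: "(e3 - e2 = 2 \<and> d = 2) \<or> (e3 - e2 = -2 \<and> int d = int n - 2)"
    by (rule dvd_close[OF k2 assms(2) dn ks2])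
  have "e1 = 1 \<or> e1 = -1" "e2 = 1 \<or> e2 = -1" "e3 = 1 \<or> e3 = -1" using e1(1) e2(1) e3(1) by auto
  with r1 r2 show ?thesis by (elim disjE conjE; auto)
qed

lemma shift_inj:
  fixes x y n d :: nat
  assumes "x < n" "y < n" "(x + d) mod n = (y + d) mod n"
  shows "x = y"
proof -
  have "(int x + int d) mod int n = (int y + int d) mod int n" using assms(3) by (metis of_nat_add zmod_int)
  then have "int n dvd (int x + int d) - (int y + int d)" by (simp only: mod_eq_dvd_iff)
  then have "int n dvd (int x - int y)" by simp
  then have "int x mod int n = int y mod int n" by (simp only: mod_eq_dvd_iff[symmetric])
  then show "x = y" using assms by simp
qed

lemma sucdvd:
  fixes x y n :: nat
  assumes "y = Suc x mod n"
  shows "int n dvd (int y - int x - 1)"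
proof -
  have "int y = (int x + 1) mod int n" using assms by (simp add: zmod_int ac_simps)
  then show ?thesis by (metis diff_diff_eq mod_mod_trivial mod_eq_dvd_iff)
qed

lemma two_cycle:
  fixes x y n :: nat
  assumes "y = Suc x mod n" "x = Suc y mod n" "3 \<le> n"
  shows False
proof -
  have "int n dvd ((int y - int x - 1) + (int x - int y - 1))"
    using dvd_add[OF sucdvd[OF assms(1)] sucdvd[OF assms(2)]] .
  then have "int n dvd 2" by simp
  then have "int n \<le> 2" by (rule zdvd_imp_le) simp
  then show False using assms(3) by simp
qed

lemma noloop_ar:
  fixes x n :: nat
  assumes "x < n" "3 \<le> n"
  shows "Suc x mod n \<noteq> x"
proof
  assume "Suc x mod n = x"
  then have "int n dvd (int x - int x - 1)" using sucdvd by metis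
  then have "int n dvd 1" by simp
  then show False using assms by simp
qed

context S begin

lemma arr_rel: "aidx c < n \<Longrightarrow> atgt n c = Suc (asrc n c) mod n \<or> asrc n c = Suc (atgt n c) mod n"
  by (cases c) auto

lemma noloop: "aidx c < n \<Longrightarrow> asrc n c \<noteq> atgt n c"
  using n3 noloop_ar by (cases c) (auto, metis)

lemma arr_uniq:
  assumes "aidx b < n" "aidx c < n" "asrc n b = asrc n c" "atgt n b = atgt n c"
  shows "b = c"
proof (cases b; cases c)
  fix i j assume "b = Ar i" "c = Ar j" then show "b = c" using assms by simp
next
  fix i j assume "b = As i" "c = As j" then show "b = c" using assms by simp
next
  fix i j assume "b = Ar i" "c = As j"
  then have "i = Suc j mod n" "j = Suc i mod n" using assms by auto
  then show "b = c" using two_cycle[of i j n] n3 by blast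
next
  fix i j assume "b = As i" "c = Ar j"
  then have "j = Suc i mod n" "i = Suc j mod n" using assms by auto
  then show "b = c" using two_cycle[of j i n] n3 by blast
qed

lemma C3:
  assumes a: "aidx a < n" and b: "aidx b < n" and c: "aidx c < n"
    and h1: "asrc n b = asrc n a" "atgt n b = (atgt n a + d) mod n"
    and h2: "asrc n c = asrc n a" "atgt n c = (atgt n b + d) mod n"
  shows "n = 4 \<and> d = 2"
proof (rule arith_core[of n d "atgt n a" "asrc n a" "atgt n b" "atgt n c"])
  show "3 \<le> n" "0 < d" "d < n" using n3 d by auto
  show "atgt n a = Suc (asrc n a) mod n \<or> asrc n a = Suc (atgt n a) mod n" using arr_rel a .
  show "atgt n b = Suc (asrc n a) mod n \<or> asrc n a = Suc (atgt n b) mod n" using arr_rel b h1 by metis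
  show "atgt n c = Suc (asrc n a) mod n \<or> asrc n a = Suc (atgt n c) mod n" using arr_rel c h2 by metis
  show "atgt n b = (atgt n a + d) mod n" "atgt n c = (atgt n b + d) mod n" using h1 h2 by auto
qed

end


lemma funpow_zero_fix: fixes f :: "'a::zero \<Rightarrow> 'a" shows "f 0 = 0 \<Longrightarrow> (f ^^ j) 0 = 0"
proof (induction j)
  case 0 show ?case by (simp add: funpow_0)
next
  case (Suc j) then show ?case by simp
qed

lemma funpow_SS: fixes f :: "'a \<Rightarrow> 'a" shows "(f ^^ Suc (Suc j)) x = (f ^^ j) (f (f x))"
  by (simp add: funpow_Suc_right del: funpow.simps)

context S begin

abbreviation "qt \<equiv> quiver_taft n lam \<gamma> \<rho>"
abbreviation "sig \<equiv> sigma_arr n lam \<gamma> \<rho>"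

lemma qt_zero: "qt 0 = 0"
  by (simp add: quiver_taft_def fun_eq_iff)

lemma qt_noarr: "(\<forall>i<n. f (Arrs [Ar i]) = 0 \<and> f (Arrs [As i]) = 0) \<Longrightarrow> qt f = 0"
  by (simp add: quiver_taft_def fun_eq_iff)

lemma qt_scale_arrow:
  assumes "aidx b < n"
  shows "qt (\<lambda>p. k * arrow b p) = (\<lambda>p. k * sig b p)"
proof
  fix p
  show "qt (\<lambda>p. k * arrow b p) p = k * sig b p"
  proof (cases b)
    case (Ar j)
    have "qt (\<lambda>p. k * arrow b p) p = (\<Sum>i<n. if i = j then k * sig (Ar j) p else 0)"
      unfolding quiver_taft_def by (rule sum.cong) (auto simp: Ar arrow_eval)
    then show ?thesis using assms Ar by simp
  next
    case (As j)
    have "qt (\<lambda>p. k * arrow b p) p = (\<Sum>i<n. if i = j then k * sig (As j) p else 0)"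
      unfolding quiver_taft_def by (rule sum.cong) (auto simp: As arrow_eval)
    then show ?thesis using assms As by simp
  qed
qed

lemma qt_arrow: "aidx a < n \<Longrightarrow> qt (arrow a) = sig a"
  using qt_scale_arrow[of a 1] by simp

lemma tmul_xx: "r = 2 \<Longrightarrow> tmul m r lam (tbasis (0,1)) (tbasis (0,1)) = (\<lambda>w. 0)"
proof
  fix w assume r2: "r = 2"
  have z: "\<And>u v. tbasis (0,1) u * tbasis (0,1) v * scoef m r lam u v w = (0::'k)"
    using r2 by (auto simp: tbasis_def scoef_def)
  show "tmul m r lam (tbasis (0,1)) (tbasis (0,1)) w = 0" unfolding tmul_def by (simp only: z sum.neutral_const)
qed

lemma xx_zero:
  assumes r2: "r = 2" and f: "f \<in> Aset n"
  shows "xact \<rho> (xact \<rho> f) = 0"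
proof -
  have T: "tbasis (0,1) \<in> Tset m r" using tbT TBs by blast
  have "xact \<rho> (xact \<rho> f) = \<rho> (tmul m r lam (tbasis (0,1)) (tbasis (0,1))) f"
  proof -
    have "\<rho> (tmul m r lam (tbasis (0,1)) (tbasis (0,1))) f = xact \<rho> (xact \<rho> f)"
      using MA_mul T f by blast
    then show ?thesis by simp
  qed
  also have "\<dots> = \<rho> (\<lambda>w. 0 * tbasis (0,1) w) f" by (subst tmul_xx[OF r2]) simp
  also have "\<dots> = (\<lambda>p. 0 * xact \<rho> f p)" using MA_scal T f by blast
  finally show ?thesis by (simp add: fun_eq_iff)
qed

end


context S begin

lemma arrow_triv: "arrow c (Triv v) = 0" by (simp add: arrow_eval)

lemma main_arrow:
  assumes nd: "n \<noteq> 4 \<or> d \<noteq> 2" and a: "aidx a < n"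
  shows "(qt ^^ r) (arrow a) = 0"
proof -
  have q1: "qt (arrow a) = sig a" by (rule qt_arrow[OF a])
  define j where "j = r - 2"
  have rj: "r = Suc (Suc j)" using r1 unfolding j_def by simp
  show ?thesis
  proof (cases "\<forall>i<n. sig a (Arrs [Ar i]) = 0 \<and> sig a (Arrs [As i]) = 0")
    case True
    then have "qt (qt (arrow a)) = 0" using q1 qt_noarr by simp
    then show ?thesis using funpow_zero_fix[of qt j, OF qt_zero] by (simp only: rj funpow_SS)
  next
    case False
    then obtain i where i: "i < n" "sig a (Arrs [Ar i]) \<noteq> 0 \<or> sig a (Arrs [As i]) \<noteq> 0" by blast
    obtain b where b: "aidx b < n" "sig a (Arrs [b]) \<noteq> 0"
    proof (cases "sig a (Arrs [Ar i]) \<noteq> 0")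
      case True then show ?thesis using i(1) that[of "Ar i"] by simp
    next
      case False then show ?thesis using i that[of "As i"] by simp
    qed
    define k where "k = sig a (Arrs [b])"
    have knz: "k \<noteq> 0" using b by (simp add: k_def)
    from sig_supp[OF a b(2)] have bs: "asrc n b = asrc n a" "atgt n b = (atgt n a + d) mod n" by auto
    have nlb: "asrc n b \<noteq> atgt n b" using noloop b(1) .
    have sa: "sig a = (\<lambda>p. k * arrow b p)"
    proof
      fix p show "sig a p = k * arrow b p"
      proof (cases "sig a p = 0")
        case True
        then have "p \<noteq> Arrs [b]" using b(2) by auto
        then show ?thesis using True by (simp add: arrow_eval)
      next
        case False
        from sig_supp[OF a False] have sp: "psrc n p = asrc n a" "ptgt n p = (atgt n a + d) mod n"
          "valid_path n p" "plen p \<le> 1" by auto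
        have "p = Arrs [b]"
        proof (cases p)
          case (Triv v) then have "asrc n b = atgt n b" using sp bs by simp
          then show ?thesis using nlb by simp
        next
          case (Arrs l)
          then obtain c where l: "l = [c]" using sp by (cases l) auto
          then have cn: "aidx c < n" using sp Arrs by simp
          have "c = b" by (rule arr_uniq[OF cn b(1)]) (use sp bs Arrs l in auto)
          then show ?thesis using Arrs l by simp
        qed
        then show ?thesis by (simp add: k_def arrow_eval)
      qed
    qed
    have q2: "qt (qt (arrow a)) = (\<lambda>p. k * sig b p)" using q1 sa qt_scale_arrow b(1) by simp
    have sbarr: "\<forall>c. aidx c < n \<longrightarrow> sig b (Arrs [c]) = 0"
    proof (intro allI impI, rule ccontr)
      fix c assume c: "aidx c < n" "sig b (Arrs [c]) \<noteq> 0"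
      from sig_supp[OF b(1) c(2)] have "asrc n c = asrc n b" "atgt n c = (atgt n b + d) mod n" by auto
      then have "n = 4 \<and> d = 2" using C3[OF a b(1) c(1)] bs by simp
      then show False using nd by simp
    qed
    have q3: "qt (\<lambda>p. k * sig b p) = 0" by (rule qt_noarr) (simp add: sbarr)
    show ?thesis
    proof (cases j)
      case (Suc j')
      have "(qt ^^ r) (arrow a) = (qt ^^ j') (qt (qt (qt (arrow a))))"
        by (simp only: rj Suc funpow_SS funpow_Suc_right comp_def)
      then show ?thesis using q2 q3 funpow_zero_fix[of qt j', OF qt_zero] by simp
    next
      case 0
      then have r2: "r = 2" using rj by simp
      have sb0: "\<forall>p. sig b p = 0"
      proof (rule allI, rule ccontr)
        fix p assume nz: "sig b p \<noteq> 0"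
        from sig_supp[OF b(1) nz] have sp: "psrc n p = asrc n b" "ptgt n p = (atgt n b + d) mod n"
          "valid_path n p" "plen p \<le> 1" by auto
        show False
        proof (cases p)
          case (Arrs l)
          then obtain c where l: "l = [c]" using sp by (cases l) auto
          then have cn: "aidx c < n" using sp Arrs by simp
          then show False using sbarr nz Arrs l by simp
        next
          case (Triv v)
          let ?a' = "gimg n d a"
          have a'n: "aidx ?a' < n" using gimg_props a by simp
          define c' where "c' = - (\<gamma> (asrc n a) * inverse lam * gmu \<mu> \<mu>s a)"
          define f1 where "f1 = (\<lambda>p. k * arrow b p)"
          define f2 where "f2 = (\<lambda>p. \<gamma> (atgt n a) * arrow a p)"
          define f3 where "f3 = (\<lambda>p. c' * arrow ?a' p)"
          have A1: "f1 \<in> Aset n" unfolding f1_def using scale_A arrow_A b(1) by blast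
          have A2: "f2 \<in> Aset n" unfolding f2_def using scale_A arrow_A a by blast
          have A3: "f3 \<in> Aset n" unfolding f3_def using scale_A arrow_A a'n by blast
          have Fd: "xact \<rho> (arrow a) = f1 + (f2 + f3)"
          proof
            fix q
            have sq: "sig a q = k * arrow b q" using sa by simp
            have e: "xact \<rho> (arrow a) q - \<gamma> (atgt n a) * arrow a q
                + \<gamma> (asrc n a) * inverse lam * (gmu \<mu> \<mu>s a * arrow ?a' q) = k * arrow b q"
              using sq unfolding sig_eval[OF a] .
            have "xact \<rho> (arrow a) q = (xact \<rho> (arrow a) q - \<gamma> (atgt n a) * arrow a q
                + \<gamma> (asrc n a) * inverse lam * (gmu \<mu> \<mu>s a * arrow ?a' q)) + \<gamma> (atgt n a) * arrow a q
                - \<gamma> (asrc n a) * inverse lam * (gmu \<mu> \<mu>s a * arrow ?a' q)" by simp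
            also have "\<dots> = k * arrow b q + \<gamma> (atgt n a) * arrow a q
                - \<gamma> (asrc n a) * inverse lam * (gmu \<mu> \<mu>s a * arrow ?a' q)" by (simp only: e)
            also have "\<dots> = (f1 + (f2 + f3)) q"
              unfolding f1_def f2_def f3_def c'_def plus_fun_def by (simp add: algebra_simps)
            finally show "xact \<rho> (arrow a) q = (f1 + (f2 + f3)) q" .
          qed
          have T: "tbasis (0,1) \<in> Tset m r" using tbT TBs by blast
          have "xact \<rho> (f1 + (f2 + f3)) = xact \<rho> f1 + (xact \<rho> f2 + xact \<rho> f3)"
            using MA_add2[rule_format, OF T A1 add_A[OF A2 A3]] MA_add2[rule_format, OF T A2 A3] by simp
          moreover have "xact \<rho> f1 = (\<lambda>p. k * xact \<rho> (arrow b) p)"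
            unfolding f1_def using MA_scal2 T arrow_A b(1) by blast
          moreover have "xact \<rho> f2 = (\<lambda>p. \<gamma> (atgt n a) * xact \<rho> (arrow a) p)"
            unfolding f2_def using MA_scal2 T arrow_A a by blast
          moreover have "xact \<rho> f3 = (\<lambda>p. c' * xact \<rho> (arrow ?a') p)"
            unfolding f3_def using MA_scal2 T arrow_A a'n by blast
          moreover have "xact \<rho> (f1 + (f2 + f3)) = 0"
            using xx_zero[OF r2 arrow_A[OF a]] Fd by simp
          ultimately have U: "(\<lambda>p. k * xact \<rho> (arrow b) p) + ((\<lambda>p. \<gamma> (atgt n a) * xact \<rho> (arrow a) p)
              + (\<lambda>p. c' * xact \<rho> (arrow ?a') p)) = 0" by simp
          have E: "k * xact \<rho> (arrow b) p + (\<gamma> (atgt n a) * xact \<rho> (arrow a) p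
              + c' * xact \<rho> (arrow ?a') p) = 0"
            using fun_cong[OF U, of p] by (simp only: plus_fun_apply zero_fun_apply)
          have F0: "xact \<rho> (arrow a) p = 0"
            using Fd Triv by (simp add: f1_def f2_def f3_def arrow_triv)
          have sa'0: "sig ?a' p = 0"
          proof (rule ccontr)
            assume "sig ?a' p \<noteq> 0"
            from sig_supp[OF a'n this] have "psrc n p = asrc n ?a'" "ptgt n p = (atgt n ?a' + d) mod n" by auto
            then have SE: "(asrc n a + d) mod n = ((atgt n a + d) mod n + d) mod n"
              using Triv gimg_props[OF a] by simp
            have "(atgt n a + d) mod n < n" using nlt by simp
            then have "asrc n a = (atgt n a + d) mod n"
              using shift_inj[OF src_lt[OF a] _ SE] by blast
            then show False using bs nlb by simp
          qed
          have X3: "xact \<rho> (arrow ?a') p = 0"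
            using sig_eval[OF a'n, of p] sa'0 Triv by (simp add: arrow_triv)
          have Xb: "xact \<rho> (arrow b) p = sig b p"
            using sig_eval[OF b(1), of p] Triv by (simp add: arrow_triv)
          have "k * sig b p = 0" using E F0 X3 Xb by simp
          then show False using knz nz by simp
        qed
      qed
      have "(qt ^^ r) (arrow a) = qt (qt (arrow a))"
        by (simp only: rj 0 funpow_SS funpow_0)
      also have "\<dots> = 0" using q2 sb0 by (simp add: fun_eq_iff)
      finally show ?thesis .
    qed
  qed
qed

end

theorem lemma3p4:
  fixes lam :: "'k::field" and n r m d :: nat and \<mu> \<mu>s \<gamma> :: "nat \<Rightarrow> 'k"
    and \<rho> :: "(nat \<times> nat \<Rightarrow> 'k) \<Rightarrow> (path \<Rightarrow> 'k) \<Rightarrow> (path \<Rightarrow> 'k)"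
  assumes n3: "n \<ge> 3"
    and r1: "r > 1" and m0: "m > 0" and rm: "r dvd m"
    and prim: "lam ^ r = 1" "\<forall>k. 0 < k \<and> k < r \<longrightarrow> lam ^ k \<noteq> 1"
    and charr: "(of_nat r :: 'k) \<noteq> 0"
    and modalg: "module_algebra n m r lam \<rho>"
    and lin: "linear_action n \<rho>"
    and inf: "inner_faithful n m r lam \<rho>"
    and d: "0 < d" "d \<le> n - 1"
    and mu: "\<forall>i<n. \<mu> i \<noteq> 0 \<and> \<mu>s i \<noteq> 0"
    and rot_e: "\<forall>i<n. gact \<rho> (vtx i) = vtx ((i + d) mod n)"
    and rot_a: "\<forall>i<n. gact \<rho> (arrow (Ar i)) = (\<lambda>p. \<mu> i * arrow (Ar ((i + d) mod n)) p)"
    and rot_as: "\<forall>i<n. gact \<rho> (arrow (As i)) = (\<lambda>p. \<mu>s i * arrow (As ((i + d) mod n)) p)"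
    and gam: "\<forall>i<n. xact \<rho> (vtx i) = (\<lambda>p. \<gamma> i * vtx i p - \<gamma> i * inverse lam * vtx ((i + d) mod n) p)"
    and nd: "n \<noteq> 4 \<or> d \<noteq> 2"
  shows "\<forall>a. aidx a < n \<longrightarrow> (quiver_taft n lam \<gamma> \<rho> ^^ r) (arrow a) = 0"
  proof -
  interpret S n m r d lam \<mu> \<mu>s \<gamma> \<rho> by (rule S.intro; fact)
  show ?thesis using main_arrow[OF nd] by blast
qed

end
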